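(* Let $r\ge 1$ be an integer and $k=4r$. Let $G_r$ be the following $k$-terminal digraph: start from the undirected $(r+2)\times(r+2)$ grid graph (vertices $(i,j)$, $1\le i,j\le r+2$, row $i$ counted from top, column $j$ from left, adjacent iff $|i-i'|+|j-j'|=1$); delete the four corner vertices; declare the remaining $4r$ boundary vertices to be the terminals (so there are $r$ terminals on each side) and all $r^2$ interior vertices non-terminals; delete every edge joining two terminals; finally orient every horizontal edge from left to right and every vertical edge from top to bottom. Then $G_r$ is acyclic and every reachability-preserving minor of $G_r$ contains at least $r^2=(k/4)^2$ non-terminal vertices. In particular, for infinitely many $k$ there is a $k$-terminal acyclic directed grid for which every reachability-preserving minor has $\Omega(k^2)$ non-terminals.
   Context: A minor of a digraph $G$ is any digraph obtained from $G$ by a sequence of vertex deletions, edge deletions and edge contractions (contracting a directed edge $(u,v)$ identifies $u$ and $v$ into one vertex, discarding loops), where terminals are never deleted and no contraction identifies two terminals. A digraph $H$ containing the terminal set $K$ is a reachability-preserving minor of $G$ if $H$ is a minor of $G$ and for all $x,x'\in K$ there is a directed path from $x$ to $x'$ in $H$ if and only if there is one in $G$. *)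

theory Defs
  imports Main
begin

text \<open>Contraction identifies u and v: one endpoint w (a non-terminal) is renamed
  to the other endpoint z; the merged vertex keeps the name z; loops are discarded.\<close>

type_synonym 'a digraph = "'a set \<times> ('a \<times> 'a) set"

definition rename :: "'a \<Rightarrow> 'a \<Rightarrow> 'a \<Rightarrow> 'a" where
  "rename w z x = (if x = w then z else x)"

inductive minor_step :: "'a set \<Rightarrow> 'a digraph \<Rightarrow> 'a digraph \<Rightarrow> bool" for K where
  del_vertex: "x \<in> V \<Longrightarrow> x \<notin> K \<Longrightarrow>
     minor_step K (V, E) (V - {x}, {(a, b) \<in> E. a \<noteq> x \<and> b \<noteq> x})"
| del_edge: "e \<in> E \<Longrightarrow> minor_step K (V, E) (V, E - {e})"
| contract: "(u, v) \<in> E \<Longrightarrow> u \<noteq> v \<Longrightarrow> \<not> (u \<in> K \<and> v \<in> K) \<Longrightarrow>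
     {w, z} = {u, v} \<Longrightarrow> w \<noteq> z \<Longrightarrow> w \<notin> K \<Longrightarrow>
     minor_step K (V, E)
       (V - {w}, {(rename w z a, rename w z b) | a b. (a, b) \<in> E \<and> rename w z a \<noteq> rename w z b})"

definition is_minor :: "'a set \<Rightarrow> 'a digraph \<Rightarrow> 'a digraph \<Rightarrow> bool" where
  "is_minor K G H = (minor_step K)\<^sup>*\<^sup>* G H"

definition reach_pres_minor :: "'a set \<Rightarrow> 'a digraph \<Rightarrow> 'a digraph \<Rightarrow> bool" where
  "reach_pres_minor K G H \<longleftrightarrow> is_minor K G H \<and>
     (\<forall>x\<in>K. \<forall>x'\<in>K. (x, x') \<in> (snd H)\<^sup>* \<longleftrightarrow> (x, x') \<in> (snd G)\<^sup>*)"

definition grid_V :: "nat \<Rightarrow> (nat \<times> nat) set" where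
  "grid_V r = {(i, j). 1 \<le> i \<and> i \<le> r + 2 \<and> 1 \<le> j \<and> j \<le> r + 2
      \<and> (i, j) \<notin> {(1, 1), (1, r + 2), (r + 2, 1), (r + 2, r + 2)}}"

definition grid_K :: "nat \<Rightarrow> (nat \<times> nat) set" where
  "grid_K r = {(i, j) \<in> grid_V r. i = 1 \<or> i = r + 2 \<or> j = 1 \<or> j = r + 2}"

definition grid_E :: "nat \<Rightarrow> ((nat \<times> nat) \<times> (nat \<times> nat)) set" where
  "grid_E r = {(p, q). p \<in> grid_V r \<and> q \<in> grid_V r \<and> \<not> (p \<in> grid_K r \<and> q \<in> grid_K r) \<and>
      ((fst q = fst p \<and> snd q = snd p + 1) \<or> (snd q = snd p \<and> fst q = fst p + 1))}"

definition grid :: "nat \<Rightarrow> (nat \<times> nat) digraph" where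
  "grid r = (grid_V r, grid_E r)"

end

theory Submission
  imports Defs
begin


definition adj :: "nat\<times>nat \<Rightarrow> nat\<times>nat \<Rightarrow> bool" where
 "adj x y \<longleftrightarrow> (fst x = fst y \<and> (snd y = snd x + 1 \<or> snd x = snd y + 1)) \<or>
              (snd x = snd y \<and> (fst y = fst x + 1 \<or> fst x = fst y + 1))"

fun walk :: "(nat\<times>nat) list \<Rightarrow> bool" where
  "walk (x#y#ys) = (adj x y \<and> walk (y#ys))"
| "walk _ = True"

fun pc :: "('p \<Rightarrow> 'p \<Rightarrow> bool) \<Rightarrow> 'p list \<Rightarrow> nat" where
  "pc P (x#y#ys) = (if P x y then 1 else 0) + pc P (y#ys)"
| "pc P _ = 0"

lemma pc_par: fixes Q :: "'a \<Rightarrow> bool" shows "xs \<noteq> [] \<Longrightarrow> even (pc (\<lambda>u v. Q u \<noteq> Q v) xs) \<longleftrightarrow> (Q (hd xs) = Q (last xs))"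
  by (induction xs rule: induct_list012) auto

lemma pc_cong: "walk xs \<Longrightarrow> (\<And>u v. u \<in> set xs \<Longrightarrow> v \<in> set xs \<Longrightarrow> adj u v \<Longrightarrow> P u v = P' u v)
   \<Longrightarrow> pc P xs = pc P' xs"
  by (induction xs rule: induct_list012) auto

lemma pc_zero: "walk xs \<Longrightarrow> (\<And>u v. u \<in> set xs \<Longrightarrow> v \<in> set xs \<Longrightarrow> adj u v \<Longrightarrow> \<not> P u v)
   \<Longrightarrow> pc P xs = 0"
  by (induction xs rule: induct_list012) auto

lemma pc_add: "walk xs \<Longrightarrow> (\<And>u v. u \<in> set xs \<Longrightarrow> v \<in> set xs \<Longrightarrow> adj u v \<Longrightarrow>
     R u v = (P u v \<or> Q u v) \<and> \<not> (P u v \<and> Q u v))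
   \<Longrightarrow> pc R xs = pc P xs + pc Q xs"
proof (induction xs rule: induct_list012)
  case (3 x y zs)
  have "R x y = (P x y \<or> Q x y) \<and> \<not> (P x y \<and> Q x y)" using 3(3,4) by auto
  moreover have "pc R (y#zs) = pc P (y#zs) + pc Q (y#zs)" using 3 by auto
  ultimately show ?case by auto
qed auto

lemma walk_Cons: "ys \<noteq> [] \<Longrightarrow> walk (x#ys) = (adj x (hd ys) \<and> walk ys)"
  by (cases ys) auto

lemma walk_snoc: "walk xs \<Longrightarrow> xs \<noteq> [] \<Longrightarrow> adj (last xs) z \<Longrightarrow> walk (xs @ [z])"
  by (induction xs rule: induct_list012) auto

lemma adj_cases:
  assumes "adj u v"
  obtains a b where "u = (a,b)" "v = (a,b+1)" | a b where "v = (a,b)" "u = (a,b+1)"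
   | a b where "u = (a,b)" "v = (a+1,b)" | a b where "v = (a,b)" "u = (a+1,b)"
  using assms unfolding adj_def by (cases u; cases v) auto

definition Vx :: "nat \<Rightarrow> nat \<Rightarrow> nat\<times>nat \<Rightarrow> nat\<times>nat \<Rightarrow> bool" where
  "Vx a b u v \<longleftrightarrow> snd u < b \<and> snd v < b \<and> (fst u \<le> a) \<noteq> (fst v \<le> a)"

lemma horiz: "walk W \<Longrightarrow> (a,b) \<notin> set W \<Longrightarrow> pc (Vx a b) W = pc (Vx a (b+1)) W"
  apply (erule pc_cong)
  subgoal for u v
  proof -
    assume "u \<in> set W" "v \<in> set W" "adj u v" "(a,b) \<notin> set W"
    then have "u \<noteq> (a,b)" "v \<noteq> (a,b)" by auto
    with \<open>adj u v\<close> show ?thesis by (cases rule: adj_cases) (auto simp: Vx_def)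
  qed
  done

lemma vert: assumes "walk W" "(a+1,b) \<notin> set W" "W \<noteq> []"
  "\<not> (fst (hd W) = a+1 \<and> snd (hd W) < b)" "\<not> (fst (last W) = a+1 \<and> snd (last W) < b)"
  shows "even (pc (Vx a b) W) = even (pc (Vx (a+1) b) W)"
proof -
  let ?Q = "\<lambda>z. fst z = a+1 \<and> snd z < b"
  have "pc (\<lambda>u v. ?Q u \<noteq> ?Q v) W = pc (Vx a b) W + pc (Vx (a+1) b) W"
    apply (rule pc_add[OF assms(1)])
    subgoal for u v
    proof -
      assume "u \<in> set W" "v \<in> set W" "adj u v"
      then have "u \<noteq> (a+1,b)" "v \<noteq> (a+1,b)" using assms(2) by auto
      with \<open>adj u v\<close> show ?thesis by (cases rule: adj_cases) (auto simp: Vx_def)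
    qed
    done
  moreover have "even (pc (\<lambda>u v. ?Q u \<noteq> ?Q v) W)"
    using pc_par[OF assms(3), of ?Q] assms(4,5) by auto
  ultimately show ?thesis by auto
qed

lemma crossing:
  assumes W: "walk W" "W \<noteq> []" "hd W = (0,j)" "last W = (N+1,j)"
    "\<forall>z\<in>set W. 1 \<le> snd z \<and> snd z \<le> N"
  and B: "walk WB" "WB \<noteq> []" "hd WB = (i,1)" "last WB = (i,N)" "\<forall>z\<in>set WB. fst z \<le> N"
    "set WB \<inter> set W = {}" "i \<le> N"
  shows False
proof -
  define p where "p x = pc (Vx (fst x) (snd x)) W" for x
  have step: "even (p x) = even (p y)" if xy: "adj x y" "x \<notin> set W" "y \<notin> set W" "fst x \<le> N" "fst y \<le> N" for x y
    using xy(1)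
  proof (cases rule: adj_cases)
    case (1 a b) then show ?thesis using horiz[OF W(1), of a b] xy by (simp add: p_def)
  next
    case (2 a b) then show ?thesis using horiz[OF W(1), of a b] xy by (simp add: p_def)
  next
    case (3 a b) then show ?thesis using vert[OF W(1), of a b] xy W(2-4) by (simp add: p_def)
  next
    case (4 a b) then show ?thesis using vert[OF W(1), of a b] xy W(2-4) by (simp add: p_def)
  qed
  have along: "walk xs \<Longrightarrow> xs \<noteq> [] \<Longrightarrow> set xs \<inter> set W = {} \<Longrightarrow> \<forall>z\<in>set xs. fst z \<le> N \<Longrightarrow>
     even (p (hd xs)) = even (p (last xs))" for xs
  proof (induction xs rule: induct_list012)
    case (3 x y zs)
    then have "even (p x) = even (p y)" by (intro step) simp_all
    with 3 show ?case by auto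
  qed auto
  have p1: "p (i,1) = 0"
    unfolding p_def using W(1) by (rule pc_zero) (use W(5) in \<open>auto simp: Vx_def\<close>)
  have "(i,N) \<in> set WB" using B(2) B(4) last_in_set by metis
  then have "(i,N) \<notin> set W" using B(6) by auto
  have p2: "p (i,N) = pc (\<lambda>u v. (fst u \<le> i) \<noteq> (fst v \<le> i)) W"
    unfolding p_def apply simp
    apply (rule pc_cong[OF W(1)])
    subgoal for u v
    proof -
      assume "u \<in> set W" "v \<in> set W" "adj u v"
      then have "u \<noteq> (i,N)" "v \<noteq> (i,N)" "snd u \<le> N" "snd v \<le> N"
        using \<open>(i,N) \<notin> set W\<close> W(5) by auto
      with \<open>adj u v\<close> show ?thesis by (cases rule: adj_cases) (auto simp: Vx_def)
    qed
    done
  have "\<not> even (p (i,N))" unfolding p2 using pc_par[OF W(2), of "\<lambda>z. fst z \<le> i"] W(3,4) B(7) by simp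
  moreover have "even (p (i,N))" using along[OF B(1,2) B(6) B(5)] B(3,4) p1 by simp
  ultimately show False by simp
qed


lemma rt_walk:
  assumes "(s,t) \<in> {(u,v). u \<in> X \<and> v \<in> X \<and> adj u v}\<^sup>*" "s \<in> X"
  shows "\<exists>W. walk W \<and> W \<noteq> [] \<and> hd W = s \<and> last W = t \<and> set W \<subseteq> X"
  using assms(1)
proof (induction rule: rtrancl_induct)
  case base
  then show ?case using assms(2) by (intro exI[of _ "[s]"]) auto
next
  case (step y z)
  then obtain W where W: "walk W" "W \<noteq> []" "hd W = s" "last W = y" "set W \<subseteq> X" by blast
  have "walk (W @ [z])" using W step(2) by (intro walk_snoc) auto
  then show ?case using W step(2) by (intro exI[of _ "W @ [z]"]) auto
qed

definition brel :: "(nat\<times>nat) set \<Rightarrow> (nat\<times>nat \<Rightarrow> nat\<times>nat) \<Rightarrow> nat\<times>nat \<Rightarrow> ((nat\<times>nat)\<times>(nat\<times>nat)) set" where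
  "brel D f h = {(u,v). u \<in> D \<and> v \<in> D \<and> f u = h \<and> f v = h \<and> adj u v}"

lemma lift:
  assumes E: "\<forall>(a,b)\<in>E. \<exists>x y. x\<in>D \<and> y\<in>D \<and> adj x y \<and> f x = a \<and> f y = b"
    and C: "\<forall>x\<in>D. \<forall>y\<in>D. f x = f y \<longrightarrow> (x,y) \<in> (brel D f (f x))\<^sup>*"
    and s: "s \<in> D" "f s = s" and t: "t \<in> D" "f t = t" and st: "(s,t) \<in> E\<^sup>*"
  shows "\<exists>W. walk W \<and> W \<noteq> [] \<and> hd W = s \<and> last W = t \<and>
            set W \<subseteq> {x\<in>D. (s, f x) \<in> E\<^sup>* \<and> (f x, t) \<in> E\<^sup>*}"
proof -
  define X where "X = {x\<in>D. (s, f x) \<in> E\<^sup>* \<and> (f x, t) \<in> E\<^sup>*}"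
  define RX where "RX = {(u,v). u \<in> X \<and> v \<in> X \<and> adj u v}"
  have br: "brel D f h \<subseteq> RX" if "(s,h) \<in> E\<^sup>*" "(h,t) \<in> E\<^sup>*" for h
    using that unfolding brel_def RX_def X_def by auto
  have main: "(h,t) \<in> E\<^sup>* \<Longrightarrow> x \<in> D \<Longrightarrow> f x = h \<Longrightarrow> (s,x) \<in> RX\<^sup>*" if "(s,h) \<in> E\<^sup>*" for h x
    using that
  proof (induction arbitrary: x rule: rtrancl_induct)
    case base
    have "(s,x) \<in> (brel D f (f s))\<^sup>*" using C[rule_format, OF s(1) base(2)] base(3) s(2) by simp
    then have "(s,x) \<in> (brel D f s)\<^sup>*" using s(2) by simp
    moreover have "brel D f s \<subseteq> RX" using br[OF _ base(1)] by simp
    ultimately show ?case using rtrancl_mono by blast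
  next
    case (step y z)
    have "\<exists>x1 y1. x1\<in>D \<and> y1\<in>D \<and> adj x1 y1 \<and> f x1 = y \<and> f y1 = z"
      using E step(2) by auto
    then obtain x1 y1 where xy: "x1\<in>D" "y1\<in>D" "adj x1 y1" "f x1 = y" "f y1 = z"
      by blast
    have yt: "(y,t) \<in> E\<^sup>*" using step(2,4) by (rule converse_rtrancl_into_rtrancl)
    have 1: "(s,x1) \<in> RX\<^sup>*" using step(3)[OF yt xy(1,4)] .
    have sz: "(s,z) \<in> E\<^sup>*" using step(1,2) by (rule rtrancl_into_rtrancl)
    have "(x1,y1) \<in> RX" using xy step(1,4) yt sz unfolding RX_def X_def by auto
    moreover have "(y1,x) \<in> (brel D f (f y1))\<^sup>*" using C[rule_format, OF xy(2) step(5)] xy(5) step(6) by simp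
    then have "(y1,x) \<in> (brel D f z)\<^sup>*" using xy(5) by simp
    then have "(y1,x) \<in> RX\<^sup>*" using br[OF sz step(4)] rtrancl_mono by blast
    ultimately have "(x1,x) \<in> RX\<^sup>*" by (rule converse_rtrancl_into_rtrancl)
    with 1 show ?case by (rule rtrancl_trans)
  qed
  have "(s,t) \<in> RX\<^sup>*" using main[OF st] t by simp
  moreover have "s \<in> X" using s st unfolding X_def by auto
  ultimately have "\<exists>W. walk W \<and> W \<noteq> [] \<and> hd W = s \<and> last W = t \<and> set W \<subseteq> X"
    using rt_walk[of s t X] unfolding RX_def by blast
  then show ?thesis unfolding X_def .
qed

definition inv :: "nat \<Rightarrow> (nat\<times>nat) digraph \<Rightarrow> bool" where
  "inv r H \<longleftrightarrow> fst H \<subseteq> grid_V r \<and> snd H \<subseteq> fst H \<times> fst H \<and>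
    (\<exists>f D. D \<subseteq> grid_V r \<and> grid_K r \<subseteq> D \<and> (\<forall>t\<in>grid_K r. f t = t) \<and> f ` D \<subseteq> fst H \<and>
      (\<forall>(a,b)\<in>snd H. \<exists>x y. x\<in>D \<and> y\<in>D \<and> adj x y \<and> f x = a \<and> f y = b) \<and>
      (\<forall>x\<in>D. \<forall>y\<in>D. f x = f y \<longrightarrow> (x,y) \<in> (brel D f (f x))\<^sup>*))"

lemma grid_E_adj: "(p,q) \<in> grid_E r \<Longrightarrow> adj p q"
  unfolding grid_E_def adj_def by auto

lemma inv_init: "inv r (grid r)"
proof -
  have 1: "grid_E r \<subseteq> grid_V r \<times> grid_V r" unfolding grid_E_def by auto
  have 2: "grid_K r \<subseteq> grid_V r" unfolding grid_K_def by auto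
  have 3: "\<forall>(a,b)\<in>grid_E r. \<exists>x y. x \<in> grid_V r \<and> y \<in> grid_V r \<and> adj x y \<and> id x = a \<and> id y = b"
  proof
    fix p assume "p \<in> grid_E r"
    then show "case p of (a,b) \<Rightarrow> \<exists>x y. x \<in> grid_V r \<and> y \<in> grid_V r \<and> adj x y \<and> id x = a \<and> id y = b"
      using 1 grid_E_adj by (cases p) auto
  qed
  have 4: "\<forall>x\<in>grid_V r. \<forall>y\<in>grid_V r. id x = id y \<longrightarrow> (x,y) \<in> (brel (grid_V r) id (id x))\<^sup>*" by auto
  show ?thesis unfolding inv_def grid_def fst_conv snd_conv
    apply (intro conjI[OF order_refl] conjI[OF 1] exI[of _ id] exI[of _ "grid_V r"] conjI)
    using 2 3 4 by simp_all
qed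

lemma adj_sym: "adj x y \<Longrightarrow> adj y x" unfolding adj_def by auto



lemma ball_pairI: "(\<And>a b. (a,b) \<in> S \<Longrightarrow> Q a b) \<Longrightarrow> \<forall>(a,b)\<in>S. Q a b" by auto
lemma lift_edge: "\<forall>(a,b)\<in>E. P a b \<Longrightarrow> (a,b) \<in> E \<Longrightarrow> P a b" by auto

lemma inv_step:
  assumes "minor_step (grid_K r) H H'" "inv r H"
  shows "inv r H'"
  using assms
proof cases
  case (del_vertex x V E)
  from assms(2) obtain f D where I: "V \<subseteq> grid_V r" "E \<subseteq> V \<times> V" "D \<subseteq> grid_V r" "grid_K r \<subseteq> D"
    "\<forall>t\<in>grid_K r. f t = t" "f ` D \<subseteq> V"
    "\<forall>(a,b)\<in>E. \<exists>x y. x\<in>D \<and> y\<in>D \<and> adj x y \<and> f x = a \<and> f y = b"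
    "\<forall>x\<in>D. \<forall>y\<in>D. f x = f y \<longrightarrow> (x,y) \<in> (brel D f (f x))\<^sup>*"
    unfolding inv_def del_vertex by auto
  define D' where "D' = {y\<in>D. f y \<noteq> x}"
  have br: "brel D f h = brel D' f h" if "h \<noteq> x" for h
    using that unfolding brel_def D'_def by auto
  show ?thesis unfolding inv_def del_vertex fst_conv snd_conv
  proof (intro conjI exI[of _ f] exI[of _ D'])
    show "\<forall>(a,b)\<in>{(a, b). (a, b) \<in> E \<and> a \<noteq> x \<and> b \<noteq> x}. \<exists>xa y. xa \<in> D' \<and> y \<in> D' \<and> adj xa y \<and> f xa = a \<and> f y = b"
    proof (rule ball_pairI)
      fix a b assume "(a,b) \<in> {(a, b). (a, b) \<in> E \<and> a \<noteq> x \<and> b \<noteq> x}"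
      then have ab: "(a,b) \<in> E" "a \<noteq> x" "b \<noteq> x" by auto
      from lift_edge[OF I(7) ab(1)] obtain x1 y1 where "x1\<in>D" "y1\<in>D" "adj x1 y1" "f x1 = a" "f y1 = b"
        by blast
      then show "\<exists>xa y. xa \<in> D' \<and> y \<in> D' \<and> adj xa y \<and> f xa = a \<and> f y = b"
        using ab unfolding D'_def by (intro exI[of _ x1] exI[of _ y1]) auto
    qed
    show "\<forall>xa\<in>D'. \<forall>y\<in>D'. f xa = f y \<longrightarrow> (xa, y) \<in> (brel D' f (f xa))\<^sup>*"
    proof (intro ballI impI)
      fix x1 y1 assume a: "x1 \<in> D'" "y1 \<in> D'" "f x1 = f y1"
      then have "(x1,y1) \<in> (brel D f (f x1))\<^sup>*" using I(8) unfolding D'_def by auto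
      moreover have "f x1 \<noteq> x" using a unfolding D'_def by auto
      ultimately show "(x1, y1) \<in> (brel D' f (f x1))\<^sup>*" using br by metis
    qed
  qed (use I \<open>x \<notin> grid_K r\<close> in \<open>auto simp: D'_def\<close>)
next
  case (del_edge e E V)
  from assms(2) obtain f D where I: "V \<subseteq> grid_V r" "E \<subseteq> V \<times> V" "D \<subseteq> grid_V r" "grid_K r \<subseteq> D"
    "\<forall>t\<in>grid_K r. f t = t" "f ` D \<subseteq> V"
    "\<forall>(a,b)\<in>E. \<exists>x y. x\<in>D \<and> y\<in>D \<and> adj x y \<and> f x = a \<and> f y = b"
    "\<forall>x\<in>D. \<forall>y\<in>D. f x = f y \<longrightarrow> (x,y) \<in> (brel D f (f x))\<^sup>*"
    unfolding inv_def del_edge by auto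
  show ?thesis unfolding inv_def del_edge fst_conv snd_conv
    apply (intro conjI exI[of _ f] exI[of _ D])
    using I by auto
next
  case (contract u v E w z V)
  from assms(2) obtain f D where I: "V \<subseteq> grid_V r" "E \<subseteq> V \<times> V" "D \<subseteq> grid_V r" "grid_K r \<subseteq> D"
    "\<forall>t\<in>grid_K r. f t = t" "f ` D \<subseteq> V"
    "\<forall>(a,b)\<in>E. \<exists>x y. x\<in>D \<and> y\<in>D \<and> adj x y \<and> f x = a \<and> f y = b"
    "\<forall>x\<in>D. \<forall>y\<in>D. f x = f y \<longrightarrow> (x,y) \<in> (brel D f (f x))\<^sup>*"
    unfolding inv_def contract by auto
  have c: "(u,v) \<in> E" "{w,z} = {u,v}" "w \<noteq> z" "w \<notin> grid_K r" using contract by simp_all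
  define f' where "f' = rename w z \<circ> f"
  have zV: "z \<in> V"
  proof -
    have "z \<in> {u,v}" using c(2) by blast
    moreover have "u \<in> V" "v \<in> V" using c(1) I(2) by auto
    ultimately show ?thesis by blast
  qed
  have rn: "rename w z a \<noteq> w" for a using c unfolding rename_def by auto
  have rnV: "a \<in> V \<Longrightarrow> rename w z a \<in> V - {w}" for a using zV rn unfolding rename_def by auto
  have "\<exists>x0 y0. x0\<in>D \<and> y0\<in>D \<and> adj x0 y0 \<and> f x0 = u \<and> f y0 = v"
    using I(7) \<open>(u,v) \<in> E\<close> by auto
  then obtain x0 y0 where e0: "x0\<in>D" "y0\<in>D" "adj x0 y0" "f x0 = u" "f y0 = v"
    by blast
  have mono: "brel D f h \<subseteq> brel D f' (rename w z h)" for h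
    unfolding brel_def f'_def by auto
  have symb: "sym (brel D f' h)" for h unfolding brel_def sym_def using adj_sym by auto
  have toz: "(x, x0) \<in> (brel D f' z)\<^sup>*" if "x \<in> D" "f' x = z" for x
  proof -
    have fx: "f x = w \<or> f x = z" using that unfolding f'_def rename_def by (auto split: if_splits)
    have "rename w z u = z" "rename w z v = z" using c unfolding rename_def by auto
    then have f0: "f' x0 = z" "f' y0 = z" using e0 unfolding f'_def by auto
    have uv: "{f x0, f y0} = {w, z}" using e0 c by auto
    show ?thesis
    proof (cases "f x = f x0")
      case True
      then have "(x,x0) \<in> (brel D f (f x))\<^sup>*" using I(8)[rule_format, OF that(1) e0(1)] by simp
      moreover have "rename w z (f x) = z" using that unfolding f'_def by auto
      ultimately show ?thesis using mono[of "f x"] rtrancl_mono by (metis subsetD)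
    next
      case False
      then have "f x = f y0" using fx uv by auto
      then have "(x,y0) \<in> (brel D f (f x))\<^sup>*" using I(8)[rule_format, OF that(1) e0(2)] by simp
      moreover have "rename w z (f x) = z" using that unfolding f'_def by auto
      ultimately have "(x,y0) \<in> (brel D f' z)\<^sup>*" using mono[of "f x"] rtrancl_mono by (metis subsetD)
      moreover have "(y0,x0) \<in> brel D f' z" using e0 f0 adj_sym unfolding brel_def by auto
      ultimately show ?thesis by (meson rtrancl.rtrancl_into_rtrancl)
    qed
  qed
  show ?thesis unfolding inv_def contract fst_conv snd_conv
  proof (intro conjI exI[of _ f'] exI[of _ D])
    show "\<forall>(a, b)\<in>{(rename w z a, rename w z b) |a b. (a, b) \<in> E \<and> rename w z a \<noteq> rename w z b}.
       \<exists>x y. x \<in> D \<and> y \<in> D \<and> adj x y \<and> f' x = a \<and> f' y = b"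
    proof (rule ball_pairI)
      fix a' b' assume "(a',b') \<in> {(rename w z a, rename w z b) |a b. (a, b) \<in> E \<and> rename w z a \<noteq> rename w z b}"
      then obtain a b where ab: "a' = rename w z a" "b' = rename w z b" "(a,b) \<in> E" by blast
      from lift_edge[OF I(7) ab(3)] obtain x1 y1 where "x1\<in>D" "y1\<in>D" "adj x1 y1" "f x1 = a" "f y1 = b"
        by blast
      then show "\<exists>x y. x \<in> D \<and> y \<in> D \<and> adj x y \<and> f' x = a' \<and> f' y = b'"
        using ab unfolding f'_def by (intro exI[of _ x1] exI[of _ y1]) auto
    qed
    show "\<forall>x\<in>D. \<forall>y\<in>D. f' x = f' y \<longrightarrow> (x, y) \<in> (brel D f' (f' x))\<^sup>*"
    proof (intro ballI impI)
      fix x y assume xy: "x \<in> D" "y \<in> D" "f' x = f' y"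
      show "(x, y) \<in> (brel D f' (f' x))\<^sup>*"
      proof (cases "f' x = z")
        case True
        have "(x,x0) \<in> (brel D f' z)\<^sup>*" "(y,x0) \<in> (brel D f' z)\<^sup>*" using toz xy True by auto
        then show ?thesis using True symb[of z] sym_rtrancl[of "brel D f' z"]
          by (metis rtrancl_trans symD)
      next
        case False
        then have "f x = f y" "rename w z (f x) = f x" using xy unfolding f'_def rename_def
          by (auto split: if_splits)
        then have "(x,y) \<in> (brel D f (f x))\<^sup>*" using I(8)[rule_format, OF xy(1,2)] by simp
        then show ?thesis using mono[of "f x"] rtrancl_mono \<open>rename w z (f x) = f x\<close>
          unfolding f'_def by (metis comp_apply subsetD)
      qed
    qed
    show "f' ` D \<subseteq> V - {w}"
    proof
      fix y assume "y \<in> f' ` D"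
      then obtain x where "x \<in> D" "y = f' x" by blast
      then have "f x \<in> V" "y = rename w z (f x)" using I(6) unfolding f'_def by auto
      then show "y \<in> V - {w}" using rnV by simp
    qed
    show "\<forall>t\<in>grid_K r. f' t = t" using I(5) c unfolding f'_def rename_def by auto
    show "{(rename w z a, rename w z b) |a b. (a, b) \<in> E \<and> rename w z a \<noteq> rename w z b}
      \<subseteq> (V - {w}) \<times> (V - {w})"
    proof (rule subsetI)
      fix p assume "p \<in> {(rename w z a, rename w z b) |a b. (a, b) \<in> E \<and> rename w z a \<noteq> rename w z b}"
      then obtain a b where ab: "p = (rename w z a, rename w z b)" "(a,b) \<in> E" by blast
      then have "a \<in> V" "b \<in> V" using I(2) by auto
      then show "p \<in> (V - {w}) \<times> (V - {w})" using ab(1) rnV by auto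
    qed
  qed (use I in auto)
qed

lemma inv_minor: "is_minor (grid_K r) (grid r) H \<Longrightarrow> inv r H"
  unfolding is_minor_def
  by (induction rule: rtranclp_induct) (auto intro: inv_init inv_step)


lemma V_iff: "x \<in> grid_V r \<longleftrightarrow> 1 \<le> fst x \<and> fst x \<le> r+2 \<and> 1 \<le> snd x \<and> snd x \<le> r+2 \<and>
   x \<noteq> (1,1) \<and> x \<noteq> (1,r+2) \<and> x \<noteq> (r+2,1) \<and> x \<noteq> (r+2,r+2)"
  by (cases x) (simp add: grid_V_def)

lemma V_bounds: "x \<in> grid_V r \<Longrightarrow> 1 \<le> fst x \<and> fst x \<le> r+2 \<and> 1 \<le> snd x \<and> snd x \<le> r+2"
  by (simp add: V_iff)

lemma K_iff: "x \<in> grid_K r \<longleftrightarrow> x \<in> grid_V r \<and> (fst x = 1 \<or> fst x = r+2 \<or> snd x = 1 \<or> snd x = r+2)"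
  by (cases x) (simp add: grid_K_def)

lemma E_iff: "(p,q) \<in> grid_E r \<longleftrightarrow> p \<in> grid_V r \<and> q \<in> grid_V r \<and> \<not> (p \<in> grid_K r \<and> q \<in> grid_K r) \<and>
      ((fst q = fst p \<and> snd q = snd p + 1) \<or> (snd q = snd p \<and> fst q = fst p + 1))"
  by (simp add: grid_E_def)

lemma E_mono: "(x,y) \<in> (grid_E r)\<^sup>* \<Longrightarrow> fst x \<le> fst y \<and> snd x \<le> snd y"
  by (induction rule: rtrancl_induct) (auto simp: E_iff)

lemma E_sum: "(x,y) \<in> (grid_E r)\<^sup>+ \<Longrightarrow> fst x + snd x < fst y + snd y"
  by (induction rule: trancl_induct) (auto simp: E_iff)

lemma no_in: assumes "y \<in> grid_K r" "fst y = 1 \<or> snd y = 1" shows "(z,y) \<notin> grid_E r"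
proof
  assume e: "(z,y) \<in> grid_E r"
  then have zy: "z \<in> grid_V r" "\<not> (z \<in> grid_K r \<and> y \<in> grid_K r)"
     "(fst y = fst z \<and> snd y = snd z + 1) \<or> (snd y = snd z \<and> fst y = fst z + 1)"
    by (simp_all add: E_iff)
  have "1 \<le> fst z" "1 \<le> snd z" using V_bounds[OF zy(1)] by auto
  then have "fst z = 1 \<or> snd z = 1" using assms(2) zy(3) by auto
  then have "z \<in> grid_K r" using zy(1) K_iff by auto
  then show False using zy(2) assms(1) by auto
qed

lemma no_out: assumes "x \<in> grid_K r" "fst x = r+2 \<or> snd x = r+2" shows "(x,z) \<notin> grid_E r"
proof
  assume e: "(x,z) \<in> grid_E r"
  then have zy: "z \<in> grid_V r" "\<not> (x \<in> grid_K r \<and> z \<in> grid_K r)"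
     "(fst z = fst x \<and> snd z = snd x + 1) \<or> (snd z = snd x \<and> fst z = fst x + 1)"
    by (simp_all add: E_iff)
  have "fst z \<le> r+2" "snd z \<le> r+2" using V_bounds[OF zy(1)] by auto
  then have "fst z = r+2 \<or> snd z = r+2" using assms(2) zy(3) by auto
  then have "z \<in> grid_K r" using zy(1) K_iff by auto
  then show False using zy(2) assms(1) by auto
qed

lemma src: "(x,y) \<in> (grid_E r)\<^sup>* \<Longrightarrow> y \<in> grid_K r \<Longrightarrow> fst y = 1 \<or> snd y = 1 \<Longrightarrow> x = y"
  by (erule rtranclE) (auto dest: no_in)

lemma snk: "(x,y) \<in> (grid_E r)\<^sup>* \<Longrightarrow> x \<in> grid_K r \<Longrightarrow> fst x = r+2 \<or> snd x = r+2 \<Longrightarrow> x = y"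
  by (erule converse_rtranclE) (auto dest: no_out)

lemma col_path: "1 \<le> r \<Longrightarrow> 2 \<le> j \<Longrightarrow> j \<le> r+1 \<Longrightarrow> n \<le> r+1 \<Longrightarrow> ((1,j),(1+n,j)) \<in> (grid_E r)\<^sup>*"
proof (induction n)
  case (Suc n)
  have "((1+n,j),(1+Suc n,j)) \<in> grid_E r"
    using Suc.prems unfolding E_iff K_iff V_iff by auto
  with Suc show ?case by (meson Suc_leD rtrancl.rtrancl_into_rtrancl)
qed simp

lemma row_path: "1 \<le> r \<Longrightarrow> 2 \<le> i \<Longrightarrow> i \<le> r+1 \<Longrightarrow> n \<le> r+1 \<Longrightarrow> ((i,1),(i,1+n)) \<in> (grid_E r)\<^sup>*"
proof (induction n)
  case (Suc n)
  have "((i,1+n),(i,1+Suc n)) \<in> grid_E r"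
    using Suc.prems unfolding E_iff K_iff V_iff by auto
  with Suc show ?case by (meson Suc_leD rtrancl.rtrancl_into_rtrancl)
qed simp

lemma finite_V: "finite (grid_V r)"
proof -
  have "grid_V r \<subseteq> {0..r+2} \<times> {0..r+2}" using V_bounds by fastforce
  then show ?thesis by (rule finite_subset) auto
qed

lemma K_facts:
  assumes "2 \<le> j" "j \<le> r+1"
  shows "(1,j) \<in> grid_K r" "(r+2,j) \<in> grid_K r" "(j,1) \<in> grid_K r" "(j,r+2) \<in> grid_K r"
  using assms unfolding K_iff V_iff by auto

lemma K_cases: "v \<in> grid_K r \<Longrightarrow> fst v = 1 \<or> snd v = 1 \<or> fst v = r+2 \<or> snd v = r+2"
  unfolding K_iff by auto

lemma K_sub: "grid_K r \<subseteq> grid_V r" using K_iff by blast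

theorem theorem1p3:
  fixes r :: nat
  assumes "r \<ge> 1"
  shows "acyclic (grid_E r) \<and>
    (\<forall>H :: (nat \<times> nat) digraph. reach_pres_minor (grid_K r) (grid r) H \<longrightarrow>
       card (fst H - grid_K r) \<ge> r ^ 2)"
proof (intro conjI allI impI)
  show "acyclic (grid_E r)" unfolding acyclic_def using E_sum by fastforce
next
  fix H :: "(nat \<times> nat) digraph"
  assume rp: "reach_pres_minor (grid_K r) (grid r) H"
  obtain VH EH where H: "H = (VH,EH)" by fastforce
  have "inv r H" using rp inv_minor unfolding reach_pres_minor_def by blast
  then obtain f D where I: "VH \<subseteq> grid_V r" "EH \<subseteq> VH \<times> VH" "D \<subseteq> grid_V r" "grid_K r \<subseteq> D"
    "\<forall>t\<in>grid_K r. f t = t" "f ` D \<subseteq> VH"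
    "\<forall>(a,b)\<in>EH. \<exists>x y. x\<in>D \<and> y\<in>D \<and> adj x y \<and> f x = a \<and> f y = b"
    "\<forall>x\<in>D. \<forall>y\<in>D. f x = f y \<longrightarrow> (x,y) \<in> (brel D f (f x))\<^sup>*"
    unfolding inv_def H by auto
  have reach: "\<And>x x'. x \<in> grid_K r \<Longrightarrow> x' \<in> grid_K r \<Longrightarrow> (x,x') \<in> EH\<^sup>* \<longleftrightarrow> (x,x') \<in> (grid_E r)\<^sup>*"
    using rp unfolding reach_pres_minor_def H grid_def by auto
  define Idx where "Idx = {2..r+1}"
  define P where "P i j v \<longleftrightarrow> ((1,j),v) \<in> EH\<^sup>* \<and> (v,(r+2,j)) \<in> EH\<^sup>* \<and> ((i,1),v) \<in> EH\<^sup>* \<and> (v,(i,r+2)) \<in> EH\<^sup>*"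
    for i j v
  have cross: "\<exists>v. P i j v" if ij: "i \<in> Idx" "j \<in> Idx" for i j
  proof (rule ccontr)
    assume nv: "\<nexists>v. P i j v"
    have ij': "2 \<le> i" "i \<le> r+1" "2 \<le> j" "j \<le> r+1" using ij unfolding Idx_def by auto
    note Kj = K_facts[OF ij'(3,4)] and Ki = K_facts[OF ij'(1,2)]
    have "((1,j),(1+(r+1),j)) \<in> (grid_E r)\<^sup>*" using col_path[OF assms ij'(3,4), of "r+1"] by simp
    then have c1: "((1,j),(r+2,j)) \<in> EH\<^sup>*" using reach Kj by (simp add: add.commute)
    have "((i,1),(i,1+(r+1))) \<in> (grid_E r)\<^sup>*" using row_path[OF assms ij'(1,2), of "r+1"] by simp
    then have c2: "((i,1),(i,r+2)) \<in> EH\<^sup>*" using reach Ki by (simp add: add.commute)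
    obtain WA where WA: "walk WA" "WA \<noteq> []" "hd WA = (1,j)" "last WA = (r+2,j)"
      "set WA \<subseteq> {x\<in>D. ((1,j), f x) \<in> EH\<^sup>* \<and> (f x, (r+2,j)) \<in> EH\<^sup>*}"
    proof -
      have "(1,j) \<in> D" "f (1,j) = (1,j)" "(r+2,j) \<in> D" "f (r+2,j) = (r+2,j)" using I(4,5) Kj by auto
      from lift[OF I(7) I(8) this c1] show ?thesis using that by blast
    qed
    obtain WB where WB: "walk WB" "WB \<noteq> []" "hd WB = (i,1)" "last WB = (i,r+2)"
      "set WB \<subseteq> {x\<in>D. ((i,1), f x) \<in> EH\<^sup>* \<and> (f x, (i,r+2)) \<in> EH\<^sup>*}"
    proof -
      have "(i,1) \<in> D" "f (i,1) = (i,1)" "(i,r+2) \<in> D" "f (i,r+2) = (i,r+2)" using I(4,5) Ki by auto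
      from lift[OF I(7) I(8) this c2] show ?thesis using that by blast
    qed
    define W where "W = (0,j) # WA @ [(r+2+1,j)]"
    have AD: "set WA \<subseteq> grid_V r" "set WB \<subseteq> grid_V r" using WA(5) WB(5) I(3) by auto
    have "walk (WA @ [(r+2+1,j)])" using WA by (intro walk_snoc) (auto simp: adj_def)
    then have wW: "walk W" unfolding W_def using WA by (subst walk_Cons) (auto simp: adj_def)
    have "set WB \<inter> set WA = {}"
    proof (rule ccontr)
      assume "set WB \<inter> set WA \<noteq> {}"
      then obtain x where "x \<in> set WA" "x \<in> set WB" by blast
      then have "P i j (f x)" using WA(5) WB(5) unfolding P_def by auto
      then show False using nv by blast
    qed
    moreover have "(0,j) \<notin> set WB" "(r+2+1,j) \<notin> set WB" using AD V_bounds by fastforce+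
    ultimately have disj: "set WB \<inter> set W = {}" unfolding W_def by auto
    show False
    proof (rule crossing[OF wW _ _ _ _ WB(1-4)])
      show "W \<noteq> []" "hd W = (0,j)" "last W = (r+2+1,j)" unfolding W_def by auto
      show "\<forall>z\<in>set W. 1 \<le> snd z \<and> snd z \<le> r+2" unfolding W_def using AD V_bounds ij' by fastforce
      show "\<forall>z\<in>set WB. fst z \<le> r+2" using AD V_bounds by fastforce
      show "set WB \<inter> set W = {}" by (rule disj)
      show "i \<le> r+2" using ij' by simp
    qed
  qed
  define vf where "vf p = (SOME v. P (fst p) (snd p) v)" for p
  have vfP: "P i j (vf (i,j))" if "i \<in> Idx" "j \<in> Idx" for i j
    using cross[OF that] unfolding vf_def by (auto intro: someI_ex)
  have nK: "vf (i,j) \<notin> grid_K r" if ij: "i \<in> Idx" "j \<in> Idx" for i j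
  proof
    assume vK: "vf (i,j) \<in> grid_K r"
    have ij': "2 \<le> i" "i \<le> r+1" "2 \<le> j" "j \<le> r+1" using ij unfolding Idx_def by auto
    note Kj = K_facts[OF ij'(3,4)] and Ki = K_facts[OF ij'(1,2)]
    have g: "((1,j),vf (i,j)) \<in> (grid_E r)\<^sup>*" "(vf (i,j),(r+2,j)) \<in> (grid_E r)\<^sup>*"
       "((i,1),vf (i,j)) \<in> (grid_E r)\<^sup>*" "(vf (i,j),(i,r+2)) \<in> (grid_E r)\<^sup>*"
      using vfP[OF ij] reach vK Kj Ki unfolding P_def by auto
    from K_cases[OF vK] show False
    proof (elim disjE)
      assume "fst (vf (i,j)) = 1"
      then have "(1,j) = vf (i,j)" "(i,1) = vf (i,j)" using src[OF g(1) vK] src[OF g(3) vK] by auto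
      then have "(1::nat,j) = (i,1)" by simp
      then show False using ij' by simp
    next
      assume "snd (vf (i,j)) = 1"
      then have "(1,j) = vf (i,j)" "(i,1) = vf (i,j)" using src[OF g(1) vK] src[OF g(3) vK] by auto
      then have "(1::nat,j) = (i,1)" by simp
      then show False using ij' by simp
    next
      assume "fst (vf (i,j)) = r+2"
      then have "vf (i,j) = (r+2,j)" "vf (i,j) = (i,r+2)" using snk[OF g(2) vK] snk[OF g(4) vK] by auto
      then have "(r+2,j) = (i,r+2)" by simp
      then show False using ij' by simp
    next
      assume "snd (vf (i,j)) = r+2"
      then have "vf (i,j) = (r+2,j)" "vf (i,j) = (i,r+2)" using snk[OF g(2) vK] snk[OF g(4) vK] by auto
      then have "(r+2,j) = (i,r+2)" by simp
      then show False using ij' by simp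
    qed
  qed
  have inV: "vf (i,j) \<in> VH" if ij: "i \<in> Idx" "j \<in> Idx" for i j
  proof -
    have ij': "2 \<le> j" "j \<le> r+1" using ij unfolding Idx_def by auto
    have "((1,j), vf (i,j)) \<in> EH\<^sup>*" using vfP[OF ij] unfolding P_def by auto
    moreover have "(1,j) \<noteq> vf (i,j)" using nK[OF ij] K_facts[OF ij'] by auto
    ultimately obtain y where "(y, vf (i,j)) \<in> EH" by (metis rtranclE)
    then show ?thesis using I(2) by auto
  qed
  have inj: "inj_on vf (Idx \<times> Idx)"
  proof (rule inj_onI)
    fix p q assume pq: "p \<in> Idx \<times> Idx" "q \<in> Idx \<times> Idx" "vf p = vf q"
    obtain i j where p: "p = (i,j)" by fastforce
    obtain i' j' where q: "q = (i',j')" by fastforce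
    have ij: "i \<in> Idx" "j \<in> Idx" "i' \<in> Idx" "j' \<in> Idx" using pq p q by auto
    then have b: "2 \<le> i" "i \<le> r+1" "2 \<le> j" "j \<le> r+1" "2 \<le> i'" "i' \<le> r+1" "2 \<le> j'" "j' \<le> r+1"
      unfolding Idx_def by auto
    have P1: "P i j (vf p)" using vfP[OF ij(1,2)] p by simp
    have P2: "P i' j' (vf p)" using vfP[OF ij(3,4)] pq(3) q by simp
    have "((1,j),(r+2,j')) \<in> EH\<^sup>*" "((1,j'),(r+2,j)) \<in> EH\<^sup>*"
         "((i,1),(i',r+2)) \<in> EH\<^sup>*" "((i',1),(i,r+2)) \<in> EH\<^sup>*"
      using P1 P2 unfolding P_def by (meson rtrancl_trans)+
    then have "((1,j),(r+2,j')) \<in> (grid_E r)\<^sup>*" "((1,j'),(r+2,j)) \<in> (grid_E r)\<^sup>*"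
         "((i,1),(i',r+2)) \<in> (grid_E r)\<^sup>*" "((i',1),(i,r+2)) \<in> (grid_E r)\<^sup>*"
      using reach K_facts b by auto
    then have "j \<le> j'" "j' \<le> j" "i \<le> i'" "i' \<le> i" by (auto dest!: E_mono)
    then show "p = q" using p q by auto
  qed
  have "vf ` (Idx \<times> Idx) \<subseteq> VH - grid_K r" using nK inV by auto
  moreover have "finite (VH - grid_K r)" using I(1) finite_V finite_subset by blast
  ultimately have "card (vf ` (Idx \<times> Idx)) \<le> card (VH - grid_K r)" by (rule card_mono[rotated])
  moreover have "card (vf ` (Idx \<times> Idx)) = r ^ 2"
    using card_image[OF inj] unfolding Idx_def by (simp add: card_cartesian_product power2_eq_square)
  ultimately show "card (fst H - grid_K r) \<ge> r ^ 2" using H by simp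
qed

end
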